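(* Let $T'$ and $T''$ be canonical subtrees (with respect to a weighted rooted tree $T$ and an integer $k\ge 4$) such that $T''$ is one of the connected components of the forest obtained from $T'$ by deleting the vertices of $C_{T'}$. Let $v$ be a vertex of $T''$. Let $X$ be the set of vertices in $C_{T'}$ that are ancestors of $v$ in $T$, let $x$ be the element of $X$ that is deepest in $T$, and let $x'$ be the child of $x$ that is an ancestor of $v$. Then $x'=rt(T'')$.
   Context: Let $T$ be a rooted tree on $n$ vertices with positive edge weights. Ancestor/descendant refer to $T$, and a vertex counts as its own ancestor and descendant. $T_v$ denotes the subtree of $T$ rooted at $v$. For every non-leaf vertex $v$ of $T$ fix a child $c_1(v)$ with $|T_{c_1(v)}|$ maximal among the children of $v$; the edges $(v,c_1(v))$ are called leftmost. A subtree $R$ of $T$ (connected subgraph) is rooted at its vertex closest to the root of $T$, denoted $rt(R)$, and inherits the leftmost labelling; $R_v$ is the subtree of $R$ rooted at $v$. For $v\in V(R)$, $P_R(v)$ is the longest downward path from $v$ in $R$ using only leftmost edges; its last vertex is $l(v)$, and $l(R):=l(rt(R))$. For an integer $d$, a vertex $v$ of $R$ is $d$-balanced (in $R$) if $|R_{c_1(v)}|\le |R|-d$ (where $|R_{c_1(v)}|=0$ if $c_1(v)$ is undefined or not in $R$). $b_d(v)$ is the first $d$-balanced vertex on $P_R(v)$, or NULL if none. Define $CV(R,d)=\emptyset$ if $b_d(rt(R))$ is NULL, and otherwise, with $b=b_d(rt(R))$, $CV(R,d)=\{b\}\cup\bigcup_{w}CV(R_w,d)$, the union over the children $w$ of $b$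 in $R$. Fix an integer $k\ge 4$. For a subtree $R$ with $m$ vertices, $C_R:=V(R)$ if $k\ge m/2-1$, and otherwise $C_R:=CV(R,m/k)\cup\{l(R),rt(R)\}$. Canonical subtrees: $T$ is canonical; if $R$ is canonical, every connected component of the forest obtained from $R$ by deleting the vertices of $C_R$ (and incident edges) is canonical. *)

theory Defs
  imports Complex_Main
begin

definition anc :: "'a set \<Rightarrow> 'a \<Rightarrow> ('a \<Rightarrow> 'a) \<Rightarrow> 'a \<Rightarrow> 'a \<Rightarrow> bool" where
  "anc V r par u v \<longleftrightarrow> u \<in> V \<and> v \<in> V \<and>
     (\<exists>n. (par ^^ n) v = u \<and> (\<forall>i<n. (par ^^ i) v \<noteq> r))"

definition is_child :: "'a set \<Rightarrow> 'a \<Rightarrow> ('a \<Rightarrow> 'a) \<Rightarrow> 'a \<Rightarrow> 'a \<Rightarrow> bool" where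
  "is_child V r par w v \<longleftrightarrow> w \<in> V \<and> w \<noteq> r \<and> par w = v"

definition rooted_tree :: "'a set \<Rightarrow> 'a \<Rightarrow> ('a \<Rightarrow> 'a) \<Rightarrow> bool" where
  "rooted_tree V r par \<longleftrightarrow> finite V \<and> r \<in> V \<and> (\<forall>v\<in>V - {r}. par v \<in> V)
     \<and> (\<forall>v\<in>V. anc V r par r v)"

definition subT :: "'a set \<Rightarrow> 'a \<Rightarrow> ('a \<Rightarrow> 'a) \<Rightarrow> 'a \<Rightarrow> 'a set" where
  "subT V r par u = {x. anc V r par u x}"

text \<open>c1 is a valid choice of leftmost (heaviest) children; its value on leaves is irrelevant.\<close>
definition leftmost_choice :: "'a set \<Rightarrow> 'a \<Rightarrow> ('a \<Rightarrow> 'a) \<Rightarrow> ('a \<Rightarrow> 'a) \<Rightarrow> bool" where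
  "leftmost_choice V r par c1 \<longleftrightarrow> (\<forall>v\<in>V. (\<exists>w. is_child V r par w v) \<longrightarrow>
      is_child V r par (c1 v) v \<and>
      (\<forall>w. is_child V r par w v \<longrightarrow> card (subT V r par w) \<le> card (subT V r par (c1 v))))"

definition subtree :: "'a set \<Rightarrow> 'a \<Rightarrow> ('a \<Rightarrow> 'a) \<Rightarrow> 'a set \<Rightarrow> bool" where
  "subtree V r par S \<longleftrightarrow> S \<subseteq> V \<and> (\<exists>\<rho>\<in>S. \<forall>u\<in>S. anc V r par \<rho> u \<and>
      (\<forall>w. anc V r par \<rho> w \<and> anc V r par w u \<longrightarrow> w \<in> S))"

definition rt :: "'a set \<Rightarrow> 'a \<Rightarrow> ('a \<Rightarrow> 'a) \<Rightarrow> 'a set \<Rightarrow> 'a" where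
  "rt V r par S = (THE \<rho>. \<rho> \<in> S \<and> (\<forall>u\<in>S. anc V r par \<rho> u))"

definition sub :: "'a set \<Rightarrow> 'a \<Rightarrow> ('a \<Rightarrow> 'a) \<Rightarrow> 'a set \<Rightarrow> 'a \<Rightarrow> 'a set" where
  "sub V r par S v = {u \<in> S. anc V r par v u}"

definition haslc :: "'a set \<Rightarrow> 'a \<Rightarrow> ('a \<Rightarrow> 'a) \<Rightarrow> ('a \<Rightarrow> 'a) \<Rightarrow> 'a set \<Rightarrow> 'a \<Rightarrow> bool" where
  "haslc V r par c1 S v \<longleftrightarrow> (\<exists>w. is_child V r par w v) \<and> c1 v \<in> S"

text \<open>length of the leftmost path P_R(v); its vertices are (c1^^i) v, i \<le> lplen\<close>
definition lplen :: "'a set \<Rightarrow> 'a \<Rightarrow> ('a \<Rightarrow> 'a) \<Rightarrow> ('a \<Rightarrow> 'a) \<Rightarrow> 'a set \<Rightarrow> 'a \<Rightarrow> nat" where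
  "lplen V r par c1 S v = (LEAST n. \<not> haslc V r par c1 S ((c1 ^^ n) v))"

definition lend :: "'a set \<Rightarrow> 'a \<Rightarrow> ('a \<Rightarrow> 'a) \<Rightarrow> ('a \<Rightarrow> 'a) \<Rightarrow> 'a set \<Rightarrow> 'a \<Rightarrow> 'a" where
  "lend V r par c1 S v = (c1 ^^ lplen V r par c1 S v) v"

text \<open>d-balanced (d real, since it is instantiated with m/k)\<close>
definition balanced :: "'a set \<Rightarrow> 'a \<Rightarrow> ('a \<Rightarrow> 'a) \<Rightarrow> ('a \<Rightarrow> 'a) \<Rightarrow> 'a set \<Rightarrow> real \<Rightarrow> 'a \<Rightarrow> bool" where
  "balanced V r par c1 S d v \<longleftrightarrow> v \<in> S \<and>
     real (if haslc V r par c1 S v then card (sub V r par S (c1 v)) else 0) \<le> real (card S) - d"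

text \<open>b_d(v): first d-balanced vertex on P_R(v), None = NULL\<close>
definition bd :: "'a set \<Rightarrow> 'a \<Rightarrow> ('a \<Rightarrow> 'a) \<Rightarrow> ('a \<Rightarrow> 'a) \<Rightarrow> 'a set \<Rightarrow> real \<Rightarrow> 'a \<Rightarrow> 'a option" where
  "bd V r par c1 S d v =
    (if \<exists>i \<le> lplen V r par c1 S v. balanced V r par c1 S d ((c1 ^^ i) v)
     then Some ((c1 ^^ (LEAST i. balanced V r par c1 S d ((c1 ^^ i) v))) v)
     else None)"

text \<open>Membership in CV(R,d), as the least solution of the recursive definition.\<close>
inductive in_CV :: "'a set \<Rightarrow> 'a \<Rightarrow> ('a \<Rightarrow> 'a) \<Rightarrow> ('a \<Rightarrow> 'a) \<Rightarrow> 'a set \<Rightarrow> real \<Rightarrow> 'a \<Rightarrow> bool"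
  for V r par c1 where
  here: "bd V r par c1 S d (rt V r par S) = Some b \<Longrightarrow> in_CV V r par c1 S d b"
| below: "bd V r par c1 S d (rt V r par S) = Some b \<Longrightarrow> is_child V r par w b \<Longrightarrow> w \<in> S \<Longrightarrow>
     in_CV V r par c1 (sub V r par S w) d x \<Longrightarrow> in_CV V r par c1 S d x"

definition CV :: "'a set \<Rightarrow> 'a \<Rightarrow> ('a \<Rightarrow> 'a) \<Rightarrow> ('a \<Rightarrow> 'a) \<Rightarrow> 'a set \<Rightarrow> real \<Rightarrow> 'a set" where
  "CV V r par c1 S d = {x. in_CV V r par c1 S d x}"

definition CR :: "'a set \<Rightarrow> 'a \<Rightarrow> ('a \<Rightarrow> 'a) \<Rightarrow> ('a \<Rightarrow> 'a) \<Rightarrow> nat \<Rightarrow> 'a set \<Rightarrow> 'a set" where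
  "CR V r par c1 k S =
    (if real k \<ge> real (card S) / 2 - 1 then S
     else CV V r par c1 S (real (card S) / real k)
          \<union> {lend V r par c1 S (rt V r par S), rt V r par S})"

definition comps :: "'a set \<Rightarrow> 'a \<Rightarrow> ('a \<Rightarrow> 'a) \<Rightarrow> 'a set \<Rightarrow> 'a set \<Rightarrow> 'a set set" where
  "comps V r par S C = {Q. Q \<noteq> {} \<and> subtree V r par Q \<and> Q \<subseteq> S - C \<and>
     (\<forall>Q'. subtree V r par Q' \<and> Q' \<subseteq> S - C \<and> Q \<subseteq> Q' \<longrightarrow> Q' = Q)}"

inductive canonical :: "'a set \<Rightarrow> 'a \<Rightarrow> ('a \<Rightarrow> 'a) \<Rightarrow> ('a \<Rightarrow> 'a) \<Rightarrow> nat \<Rightarrow> 'a set \<Rightarrow> bool"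
  for V r par c1 k where
  top: "canonical V r par c1 k V"
| step: "canonical V r par c1 k R \<Longrightarrow> Q \<in> comps V r par R (CR V r par c1 k R) \<Longrightarrow>
     canonical V r par c1 k Q"

end

theory Submission
  imports Defs
begin

lemma anc_V: "anc V r par a b \<Longrightarrow> a \<in> V \<and> b \<in> V"
  by (simp add: anc_def)

lemma anc_refl: "a \<in> V \<Longrightarrow> anc V r par a a"
  unfolding anc_def by (rule conjI, simp, rule conjI, simp, rule exI[of _ 0], simp)

lemma anc_trans:
  assumes "anc V r par a b" "anc V r par b c"
  shows "anc V r par a c"
proof -
  from assms(1) obtain n where n: "(par ^^ n) b = a" "\<forall>i<n. (par ^^ i) b \<noteq> r"
    and V: "a \<in> V" "b \<in> V" unfolding anc_def by blast
  from assms(2) obtain m where m: "(par ^^ m) c = b" "\<forall>i<m. (par ^^ i) c \<noteq> r"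
    and V2: "c \<in> V" unfolding anc_def by blast
  have "(par ^^ (n+m)) c = a" using n m by (simp add: funpow_add)
  moreover have "\<forall>i<n+m. (par ^^ i) c \<noteq> r"
  proof (intro allI impI)
    fix i assume i: "i < n+m"
    show "(par ^^ i) c \<noteq> r"
    proof (cases "i < m")
      case True then show ?thesis using m by simp
    next
      case False
      define j where "j = i - m"
      have j: "i = j + m" "j < n" using False i unfolding j_def by auto
      have "(par ^^ i) c = (par ^^ j) b" using j m by (simp add: funpow_add)
      then show ?thesis using n j by simp
    qed
  qed
  ultimately show ?thesis unfolding anc_def using V V2 by blast
qed

lemma funpow_periodic:
  assumes "(f ^^ p) b = b"
  shows "(f ^^ (q * p + j)) b = (f ^^ j) b"
proof (induction q)
  case 0 then show ?case by simp
next
  case (Suc q)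
  have "(f ^^ (Suc q * p + j)) b = (f ^^ ((q * p + j) + p)) b" by (simp add: algebra_simps)
  also have "\<dots> = (f ^^ (q*p+j)) ((f^^p) b)" by (simp only: funpow_add comp_apply)
  finally show ?case using assms Suc by simp
qed

lemma anc_antisym:
  assumes tree: "rooted_tree V r par"
    and "anc V r par a b" "anc V r par b a"
  shows "a = b"
proof (rule ccontr)
  assume ne: "a \<noteq> b"
  from assms(2) obtain n where n: "(par ^^ n) b = a" "\<forall>i<n. (par ^^ i) b \<noteq> r"
    and V: "a \<in> V" "b \<in> V" unfolding anc_def by blast
  from assms(3) obtain m where m: "(par ^^ m) a = b" "\<forall>i<m. (par ^^ i) a \<noteq> r"
    unfolding anc_def by blast
  have per: "(par ^^ (m+n)) b = b" using n m by (simp add: funpow_add)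
  have pos: "m + n > 0" using ne n m by (cases n) auto
  have small: "(par ^^ i) b \<noteq> r" if "i < m + n" for i
  proof (cases "i < n")
    case True then show ?thesis using n by simp
  next
    case False
    define j where "j = i - n"
    have j: "i = j + n" "j < m" using False that unfolding j_def by auto
    have "(par ^^ i) b = (par ^^ j) a" using j n by (simp add: funpow_add)
    then show ?thesis using m j by simp
  qed
  have all: "(par ^^ i) b \<noteq> r" for i
  proof -
    have "(par ^^ i) b = (par ^^ (i div (m+n) * (m+n) + i mod (m+n))) b"
      by (simp only: div_mult_mod_eq)
    also have "\<dots> = (par ^^ (i mod (m+n))) b" by (rule funpow_periodic[OF per])
    finally have "(par ^^ i) b = (par ^^ (i mod (m+n))) b" .
    moreover have "i mod (m+n) < m+n" using pos by simp
    ultimately show ?thesis using small by simp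
  qed
  from tree V have "anc V r par r b" unfolding rooted_tree_def by blast
  then obtain k where "(par ^^ k) b = r" unfolding anc_def by blast
  with all show False by blast
qed

lemma anc_compar:
  assumes "anc V r par a v" "anc V r par b v"
  shows "anc V r par a b \<or> anc V r par b a"
proof -
  from assms(1) obtain n where n: "(par ^^ n) v = a" "\<forall>i<n. (par ^^ i) v \<noteq> r"
    and V: "a \<in> V" unfolding anc_def by blast
  from assms(2) obtain m where m: "(par ^^ m) v = b" "\<forall>i<m. (par ^^ i) v \<noteq> r"
    and V2: "b \<in> V" unfolding anc_def by blast
  show ?thesis
  proof (cases "n \<le> m")
    case True
    have "(par ^^ (m-n)) a = (par ^^ (m-n)) ((par ^^ n) v)" using n by simp
    also have "\<dots> = (par ^^ (m-n+n)) v" by (simp only: funpow_add comp_apply)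
    also have "m-n+n = m" using True by simp
    finally have "(par ^^ (m-n)) a = b" using m by simp
    moreover have "\<forall>i<m-n. (par ^^ i) a \<noteq> r"
    proof (intro allI impI)
      fix i assume "i < m - n"
      then have "(par ^^ (i+n)) v \<noteq> r" using m by simp
      then show "(par ^^ i) a \<noteq> r" using n by (simp add: funpow_add)
    qed
    ultimately show ?thesis unfolding anc_def using V V2 by blast
  next
    case False
    have "(par ^^ (n-m)) b = (par ^^ (n-m)) ((par ^^ m) v)" using m by simp
    also have "\<dots> = (par ^^ (n-m+m)) v" by (simp only: funpow_add comp_apply)
    also have "n-m+m = n" using False by simp
    finally have "(par ^^ (n-m)) b = a" using n by simp
    moreover have "\<forall>i<n-m. (par ^^ i) b \<noteq> r"
    proof (intro allI impI)
      fix i assume "i < n - m"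
      then have "(par ^^ (i+m)) v \<noteq> r" using n by simp
      then show "(par ^^ i) b \<noteq> r" using m by (simp add: funpow_add)
    qed
    ultimately show ?thesis unfolding anc_def using V V2 by blast
  qed
qed

lemma child_anc:
  assumes tree: "rooted_tree V r par" and c: "is_child V r par x' x"
  shows "anc V r par x x'"
proof -
  have "x' \<in> V" "x' \<noteq> r" "par x' = x" using c unfolding is_child_def by auto
  moreover then have "x \<in> V" using tree unfolding rooted_tree_def by auto
  ultimately show ?thesis unfolding anc_def
    by (intro conjI, simp, simp, intro exI[of _ 1]) auto
qed

lemma below_child:
  assumes tree: "rooted_tree V r par" and c: "is_child V r par x' x"
    and a: "anc V r par a x'" and ne: "a \<noteq> x'"
  shows "anc V r par a x"
proof -
  have x': "x' \<in> V" "x' \<noteq> r" "par x' = x" using c unfolding is_child_def by auto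
  then have xV: "x \<in> V" using tree unfolding rooted_tree_def by auto
  from a obtain n where n: "(par ^^ n) x' = a" "\<forall>i<n. (par ^^ i) x' \<noteq> r"
    and V: "a \<in> V" unfolding anc_def by blast
  then obtain k where k: "n = Suc k" using ne by (cases n) auto
  have "(par ^^ k) x = a" using n k x' by (simp add: funpow_Suc_right del: funpow.simps)
  moreover have "\<forall>i<k. (par ^^ i) x \<noteq> r"
  proof (intro allI impI)
    fix i assume "i < k"
    then have "Suc i < n" using k by simp
    then have "(par ^^ (Suc i)) x' \<noteq> r" using n(2) by blast
    then show "(par ^^ i) x \<noteq> r" using x' by (simp add: funpow_Suc_right del: funpow.simps)
  qed
  ultimately show ?thesis unfolding anc_def using V xV by blast
qed

lemma child_not_anc:
  assumes tree: "rooted_tree V r par" and c: "is_child V r par x' x"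
    and a: "anc V r par x' x"
  shows False
proof -
  have x': "x' \<in> V" "x' \<noteq> r" "par x' = x" using c unfolding is_child_def by auto
  have "x = x'" using anc_antisym[OF tree child_anc[OF tree c] a] .
  then have fx: "par x' = x'" using x' by simp
  have it: "(par ^^ k) x' = x'" for k by (induction k) (simp_all add: fx)
  from tree x' have "anc V r par r x'" unfolding rooted_tree_def by blast
  then obtain k where "(par ^^ k) x' = r" unfolding anc_def by blast
  with it x' show False by simp
qed

lemma rt_eq:
  assumes tree: "rooted_tree V r par" and "\<rho> \<in> S" "\<forall>u\<in>S. anc V r par \<rho> u"
  shows "rt V r par S = \<rho>"
  unfolding rt_def
  by (rule the_equality) (use assms anc_antisym[OF tree] in blast)+

lemma canonical_subtree:
  assumes tree: "rooted_tree V r par"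
  shows "canonical V r par c1 k S \<Longrightarrow> subtree V r par S"
proof (induction rule: canonical.induct)
  case top
  show ?case unfolding subtree_def
    using tree unfolding rooted_tree_def by (auto simp: anc_def)
next
  case (step R Q)
  then show ?case unfolding comps_def by blast
qed

theorem lemma4:
  fixes V :: "'a set" and r :: 'a and par c1 :: "'a \<Rightarrow> 'a" and k :: nat
    and T' T'' :: "'a set" and v x x' :: 'a
  assumes tree: "rooted_tree V r par"
    and lc: "leftmost_choice V r par c1"
    and k: "k \<ge> 4"
    and can': "canonical V r par c1 k T'"
    and can'': "canonical V r par c1 k T''"
    and comp: "T'' \<in> comps V r par T' (CR V r par c1 k T')"
    and v: "v \<in> T''"
    and xX: "x \<in> CR V r par c1 k T' \<and> anc V r par x v"
    and xdeep: "\<forall>y \<in> CR V r par c1 k T'. anc V r par y v \<longrightarrow> anc V r par y x"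
    and x': "is_child V r par x' x" and x'v: "anc V r par x' v"
  shows "x' = rt V r par T''"
proof -
  define C where "C = CR V r par c1 k T'"
  have sub'': "subtree V r par T''" and inc: "T'' \<subseteq> T' - C"
    and max: "\<And>Q'. subtree V r par Q' \<Longrightarrow> Q' \<subseteq> T' - C \<Longrightarrow> T'' \<subseteq> Q' \<Longrightarrow> Q' = T''"
    using comp unfolding comps_def C_def by blast+
  have sub': "subtree V r par T'" using canonical_subtree[OF tree can'] .
  then obtain \<rho>' where r1: "\<rho>' \<in> T'" and r2: "\<forall>u\<in>T'. anc V r par \<rho>' u"
    and r3: "\<forall>u\<in>T'. \<forall>w. anc V r par \<rho>' w \<and> anc V r par w u \<longrightarrow> w \<in> T'"
    unfolding subtree_def by blast
  have rt1: "rt V r par T' = \<rho>'" using rt_eq[OF tree r1 r2] .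
  have "\<rho>' \<in> C" unfolding C_def CR_def using rt1 r1 by auto
  moreover have vT': "v \<in> T'" using v inc by blast
  ultimately have ax: "anc V r par \<rho>' x" using xdeep r2 unfolding C_def by blast
  obtain \<rho> where q1: "\<rho> \<in> T''" and q2: "\<forall>u\<in>T''. anc V r par \<rho> u"
    and q3: "\<forall>u\<in>T''. \<forall>w. anc V r par \<rho> w \<and> anc V r par w u \<longrightarrow> w \<in> T''"
    and VT'': "T'' \<subseteq> V"
    using sub'' unfolding subtree_def by blast
  have xC: "x \<in> C" using xX C_def by simp
  have x'\<rho>: "anc V r par x' \<rho>"
  proof -
    have "anc V r par x' \<rho> \<or> anc V r par \<rho> x'" using anc_compar[OF x'v] q2 v by blast
    moreover have False if "anc V r par \<rho> x'" "\<rho> \<noteq> x'"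
    proof -
      have "anc V r par \<rho> x" using below_child[OF tree x' that] .
      then have "x \<in> T''" using q3 v xX by blast
      then show False using inc xC by blast
    qed
    ultimately show ?thesis by blast
  qed
  have x'V: "x' \<in> V" using x' unfolding is_child_def by simp
  define P where "P = {w. anc V r par x' w \<and> anc V r par w v}"
  have PT': "P \<subseteq> T'"
  proof
    fix w assume "w \<in> P"
    then have "anc V r par \<rho>' w" "anc V r par w v" unfolding P_def
      using anc_trans[OF anc_trans[OF ax child_anc[OF tree x']]] by blast+
    then show "w \<in> T'" using r3 vT' by blast
  qed
  have PC: "P \<inter> C = {}"
  proof (rule ccontr)
    assume "P \<inter> C \<noteq> {}"
    then obtain w where w: "w \<in> C" "anc V r par x' w" "anc V r par w v" unfolding P_def by blast
    then have "anc V r par w x" using xdeep C_def by blast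
    then show False using child_not_anc[OF tree x' anc_trans[OF w(2)]] by blast
  qed
  define Q where "Q = T'' \<union> P"
  have x'Q: "x' \<in> Q" unfolding Q_def P_def using anc_refl[OF x'V] x'v by simp
  have QV: "Q \<subseteq> V"
  proof
    fix u assume "u \<in> Q"
    then have "u \<in> T'' \<or> anc V r par x' u" unfolding Q_def P_def by blast
    then show "u \<in> V" using VT'' anc_V[of V r par x' u] by auto
  qed
  have key: "anc V r par x' u \<and> (\<forall>w. anc V r par x' w \<and> anc V r par w u \<longrightarrow> w \<in> Q)"
    if uQ: "u \<in> Q" for u
  proof (cases "u \<in> T''")
    case True
    have \<rho>u: "anc V r par \<rho> u" using q2 True by simp
    have a1: "anc V r par x' u" using anc_trans[OF x'\<rho> \<rho>u] .
    have "w \<in> Q" if w: "anc V r par x' w" "anc V r par w u" for w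
    proof -
      have "anc V r par \<rho> w \<or> anc V r par w \<rho>" using anc_compar[OF \<rho>u w(2)] .
      then show ?thesis
      proof
        assume "anc V r par \<rho> w"
        then have "w \<in> T''" using q3 True w(2) by simp
        then show ?thesis unfolding Q_def by simp
      next
        assume h: "anc V r par w \<rho>"
        have "anc V r par \<rho> v" using q2 v by simp
        then have "anc V r par w v" using anc_trans[OF h] by simp
        then show ?thesis using w(1) unfolding Q_def P_def by simp
      qed
    qed
    then show ?thesis using a1 by simp
  next
    case False
    then have uP: "u \<in> P" using uQ unfolding Q_def by simp
    then have u1: "anc V r par x' u" "anc V r par u v" unfolding P_def by simp_all
    have "w \<in> Q" if "anc V r par x' w" "anc V r par w u" for w
    proof -
      have "anc V r par w v" using anc_trans[OF that(2) u1(2)] .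
      then show ?thesis using that(1) unfolding Q_def P_def by simp
    qed
    then show ?thesis using u1 by simp
  qed
  have allQ: "\<forall>u\<in>Q. anc V r par x' u \<and> (\<forall>w. anc V r par x' w \<and> anc V r par w u \<longrightarrow> w \<in> Q)"
    using key by blast
  have exQ: "\<exists>\<rho>\<in>Q. \<forall>u\<in>Q. anc V r par \<rho> u \<and> (\<forall>w. anc V r par \<rho> w \<and> anc V r par w u \<longrightarrow> w \<in> Q)"
    using allQ x'Q by (rule bexI)
  have subQ: "subtree V r par Q" unfolding subtree_def using QV exQ by (rule conjI)
  have PTC: "P \<subseteq> T' - C" using PT' PC by blast
  have QT: "Q \<subseteq> T' - C" unfolding Q_def using inc PTC by (rule Un_least)
  have TQ: "T'' \<subseteq> Q" unfolding Q_def by blast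
  have "Q = T''" using max[OF subQ QT TQ] .
  then have xin: "x' \<in> T''" using x'Q by (rule subst)
  have allT: "\<forall>u\<in>T''. anc V r par x' u"
  proof
    fix u assume "u \<in> T''"
    then have "anc V r par \<rho> u" using q2 by (rule bspec[rotated])
    then show "anc V r par x' u" by (rule anc_trans[OF x'\<rho>])
  qed
  have "rt V r par T'' = x'" by (rule rt_eq[OF tree xin allT])
  then show ?thesis by (rule sym)
qed

end
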